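(* Let $v \in \mathbb{R}^n$ be a zero-mean subgaussian random variable with variance proxy $R \succeq 0$. Then for any symmetric positive definite matrix $H \in \mathbb{R}^{n\times n}$ and any vector $x \in \mathbb{R}^n$, $$\frac{1}{\sqrt{|H+R|}}\, \mathbb{E}\left[e^{\frac12 \|x+v\|^2_{(H+R)^{-1}}}\right] \le \frac{1}{\sqrt{|H|}}\, e^{\frac12 \|x\|^2_{H^{-1}}}.$$
   Context: A zero-mean random variable $w \in \mathbb{R}^n$ is subgaussian with variance proxy $Q \succeq 0$ (a symmetric positive semidefinite matrix) if $\mathbb{E}[e^{\nu^\top w}] \le e^{\frac12 \nu^\top Q \nu}$ for all $\nu \in \mathbb{R}^n$. For a symmetric positive definite $A$, $\|x\|_A^2 = x^\top A x$; $|A|$ denotes the determinant. *)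

theory Defs
  imports "HOL-Analysis.Analysis" "HOL-Probability.Probability"
begin

text \<open>Symmetric positive semidefinite / positive definite real matrices.\<close>
definition psd_mat :: "real^'n^'n \<Rightarrow> bool" where
  "psd_mat A \<longleftrightarrow> transpose A = A \<and> (\<forall>x. 0 \<le> x \<bullet> (A *v x))"

definition pd_mat :: "real^'n^'n \<Rightarrow> bool" where
  "pd_mat A \<longleftrightarrow> transpose A = A \<and> (\<forall>x. x \<noteq> 0 \<longrightarrow> 0 < x \<bullet> (A *v x))"

text \<open>Zero-mean subgaussian random vector with variance proxy Q on probability space M.
  The MGF bound includes finiteness of the MGF (integrability).\<close>
definition subgaussian :: "'a measure \<Rightarrow> ('a \<Rightarrow> real^'n) \<Rightarrow> real^'n^'n \<Rightarrow> bool" where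
  "subgaussian M w Q \<longleftrightarrow>
     prob_space M \<and> psd_mat Q \<and> w \<in> borel_measurable M \<and>
     integrable M w \<and> (\<integral>\<omega>. w \<omega> \<partial>M) = 0 \<and>
     (\<forall>\<nu>. integrable M (\<lambda>\<omega>. exp (\<nu> \<bullet> w \<omega>)) \<and>
          (\<integral>\<omega>. exp (\<nu> \<bullet> w \<omega>) \<partial>M) \<le> exp (1/2 * (\<nu> \<bullet> (Q *v \<nu>))))"

end

theory Submission
  imports Defs
begin


lemma prod_sf_lborel: "product_sigma_finite (\<lambda>_. lborel)"
  by (simp add: product_sigma_finite_def lborel.sigma_finite_measure_axioms)

lemma Phi_meas[measurable]: "(\<lambda>f. \<Sum>b\<in>(Basis::('a::euclidean_space) set). f b *\<^sub>R b) \<in> borel_measurable (\<Pi>\<^sub>M b\<in>Basis. lborel)"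
  by measurable

lemma nn_integral_lborel_Pi:
  fixes h :: "'a::euclidean_space \<Rightarrow> ennreal"
  assumes [measurable]: "h \<in> borel_measurable borel"
  shows "(\<integral>\<^sup>+x. h x \<partial>lborel) = (\<integral>\<^sup>+f. h (\<Sum>b\<in>Basis. f b *\<^sub>R b) \<partial>(\<Pi>\<^sub>M b\<in>Basis. lborel))"
  by (subst lborel_eq) (simp add: nn_integral_distr)

lemma shear_preserves:
  fixes j :: "'n::finite" and c :: "real^'n" and g :: "real^'n \<Rightarrow> ennreal"
  assumes cj: "c$j = 0" and [measurable]: "g \<in> borel_measurable borel"
  shows "(\<integral>\<^sup>+\<nu>. g (\<nu> + (c \<bullet> \<nu>) *\<^sub>R axis j 1) \<partial>lborel) = (\<integral>\<^sup>+\<nu>. g \<nu> \<partial>lborel)"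
proof -
  interpret P: product_sigma_finite "\<lambda>_::real^'n. (lborel::real measure)" by (rule prod_sf_lborel)
  define e :: "real^'n" where "e = axis j 1"
  define I where "I = Basis - {e}"
  have eB: "e \<in> Basis" unfolding e_def by (simp add: Basis_vec_def) blast
  have BI: "Basis = insert e I" "finite I" "e \<notin> I" using eB by (auto simp: I_def)
  have ce: "c \<bullet> e = 0" using cj by (simp add: e_def inner_axis)
  have sumup: "(\<Sum>b\<in>Basis. (x(e := y)) b *\<^sub>R b) = (\<Sum>b\<in>I. x b *\<^sub>R b) + y *\<^sub>R e" for x :: "real^'n \<Rightarrow> real" and y
  proof -
    have "(\<Sum>b\<in>Basis. (x(e := y)) b *\<^sub>R b) = y *\<^sub>R e + (\<Sum>b\<in>I. (x(e := y)) b *\<^sub>R b)"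
      unfolding BI(1) using BI(2,3) by (simp add: sum.insert)
    also have "(\<Sum>b\<in>I. (x(e := y)) b *\<^sub>R b) = (\<Sum>b\<in>I. x b *\<^sub>R b)"
      using BI by (intro sum.cong) auto
    finally show ?thesis by simp
  qed
  have sumup2: "(\<Sum>b\<in>I. (if b = e then y else x b) *\<^sub>R b) = (\<Sum>b\<in>I. x b *\<^sub>R b)" for x :: "real^'n \<Rightarrow> real" and y
    using BI by (intro sum.cong) auto
  have transl: "(\<integral>\<^sup>+y. k (s + y) \<partial>lborel) = (\<integral>\<^sup>+y. k y \<partial>lborel)" if [measurable]: "k \<in> borel_measurable borel" for k :: "real \<Rightarrow> ennreal" and s
  proof -
    have "(\<integral>\<^sup>+y. k (s + y) \<partial>lborel) = (\<integral>\<^sup>+y. k y \<partial>distr lborel borel ((+) s))"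
      by (simp add: nn_integral_distr)
    then show ?thesis by (simp add: lborel_distr_plus)
  qed
  have "(\<integral>\<^sup>+\<nu>. g (\<nu> + (c \<bullet> \<nu>) *\<^sub>R axis j 1) \<partial>lborel)
     = (\<integral>\<^sup>+f. g ((\<Sum>b\<in>Basis. f b *\<^sub>R b) + (c \<bullet> (\<Sum>b\<in>Basis. f b *\<^sub>R b)) *\<^sub>R e) \<partial>(\<Pi>\<^sub>M b\<in>Basis. lborel))"
    unfolding e_def by (rule nn_integral_lborel_Pi) measurable
  also have "\<dots> = (\<integral>\<^sup>+x. (\<integral>\<^sup>+y. g ((\<Sum>b\<in>I. x b *\<^sub>R b) + (y + c \<bullet> (\<Sum>b\<in>I. x b *\<^sub>R b)) *\<^sub>R e) \<partial>lborel) \<partial>(\<Pi>\<^sub>M b\<in>I. lborel))"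
    unfolding BI(1)
    apply (subst P.product_nn_integral_insert)
    using BI apply (auto)[2]
     apply measurable
    apply (intro nn_integral_cong)
    using BI(2,3) by (simp add: sumup2 inner_add_right ce algebra_simps)
  also have "\<dots> = (\<integral>\<^sup>+x. (\<integral>\<^sup>+y. g ((\<Sum>b\<in>I. x b *\<^sub>R b) + y *\<^sub>R e) \<partial>lborel) \<partial>(\<Pi>\<^sub>M b\<in>I. lborel))"
  proof (rule nn_integral_cong)
    fix x :: "real^'n \<Rightarrow> real"
    define z where "z = (\<Sum>b\<in>I. x b *\<^sub>R b)"
    have "(\<integral>\<^sup>+y. g (z + ((c \<bullet> z) + y) *\<^sub>R e) \<partial>lborel) = (\<integral>\<^sup>+y. g (z + y *\<^sub>R e) \<partial>lborel)"
      by (rule transl[of "\<lambda>y. g (z + y *\<^sub>R e)"]) measurable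
    then show "(\<integral>\<^sup>+y. g ((\<Sum>b\<in>I. x b *\<^sub>R b) + (y + c \<bullet> (\<Sum>b\<in>I. x b *\<^sub>R b)) *\<^sub>R e) \<partial>lborel) = (\<integral>\<^sup>+y. g ((\<Sum>b\<in>I. x b *\<^sub>R b) + y *\<^sub>R e) \<partial>lborel)"
      by (simp add: z_def add.commute)
  qed
  also have "\<dots> = (\<integral>\<^sup>+f. g (\<Sum>b\<in>Basis. f b *\<^sub>R b) \<partial>(\<Pi>\<^sub>M b\<in>Basis. lborel))"
    unfolding BI(1)
    apply (subst P.product_nn_integral_insert)
    using BI apply (auto)[2]
     apply measurable
    apply (intro nn_integral_cong)
    using BI(2,3) by (simp add: sumup2 algebra_simps)
  also have "\<dots> = (\<integral>\<^sup>+\<nu>. g \<nu> \<partial>lborel)"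
    by (rule nn_integral_lborel_Pi[symmetric]) measurable
  finally show ?thesis .
qed


lemma mvm_meas[measurable]: "(\<lambda>x. (M::real^'n::finite^'m::finite) *v x) \<in> borel_measurable borel"
  by (intro borel_measurable_continuous_onI matrix_vector_mult_linear_continuous_on)

lemma sym_form: "transpose A = A \<Longrightarrow> x \<bullet> ((A::real^'n::finite^'n) *v y) = y \<bullet> (A *v x)"
  by (metis dot_lmul_matrix inner_commute transpose_transpose vector_transpose_matrix)


definition shear_mat :: "'n::finite \<Rightarrow> real^'n \<Rightarrow> real^'n^'n" where
  "shear_mat j c = (\<chi> r k. (if r = k then 1 else 0) + (if r = j then c$k else 0))"
lemma row_mat1: "row k (mat 1 :: real^'n::finite^'n) = axis k 1"
  by (simp add: row_def mat_def axis_def vec_eq_iff)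
lemma A: "(c::real^'n::finite) = (\<Sum>k\<in>UNIV. c$k *s axis k 1)" by (simp add: basis_expansion)
lemma B: "(c::real^'n::finite)$j = 0 \<Longrightarrow> (\<Sum>k\<in>UNIV. c$k *s axis k 1) = (\<Sum>k\<in>UNIV-{j}. c$k *s axis k 1)"
    by (intro sum.mono_neutral_right) auto
lemma C: "shear_mat j c = (\<chi> k. if k = j then row j (mat 1) + c else row k (mat 1))"
    by (simp add: shear_mat_def row_mat1 vec_eq_iff axis_def)
lemma det_shear: assumes "c$j = 0" shows "det (shear_mat j c) = 1"
proof -
  have "c = (\<Sum>k\<in>UNIV. c$k *s axis k 1)" by (simp add: basis_expansion)
  also have "\<dots> = (\<Sum>k\<in>UNIV-{j}. c$k *s axis k 1)"
    using assms by (intro sum.mono_neutral_right) auto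
  finally have ceq: "c = (\<Sum>k\<in>UNIV-{j}. c$k *s axis k 1)" .
  have "(\<Sum>k\<in>UNIV-{j}. c$k *s axis k 1) \<in> vec.span {row k (mat 1::real^'a^'a) |k. k \<noteq> j}"
  proof (rule vec.span_sum)
    fix k assume "k \<in> UNIV - {j}"
    then have "axis k 1 \<in> {row k (mat 1::real^'a^'a) |k. k \<noteq> j}"
      by (auto simp: row_mat1)
    then show "c$k *s axis k 1 \<in> vec.span {row k (mat 1::real^'a^'a) |k. k \<noteq> j}"
      by (intro vec.span_scale vec.span_base)
  qed
  then have sp: "c \<in> vec.span {row k (mat 1::real^'a^'a) |k. k \<noteq> j}" using ceq by simp
  have e1: "shear_mat j c = (\<chi> k. if k = j then row j (mat 1) + c else row k (mat 1))"
    by (simp add: shear_mat_def row_mat1 vec_eq_iff axis_def)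
  have e2: "det (\<chi> k. if k = j then row j (mat 1) + c else row k (mat 1)) = det (mat 1 :: real^'a^'a)"
    using det_row_span[OF sp] .
  show ?thesis unfolding e1 e2 by (rule det_I)
qed

definition mp_mat :: "real^'n::finite^'n \<Rightarrow> bool" where
  "mp_mat M \<longleftrightarrow> (\<forall>g::real^'n \<Rightarrow> ennreal. g \<in> borel_measurable borel \<longrightarrow>
      (\<integral>\<^sup>+\<nu>. g (M *v \<nu>) \<partial>lborel) = (\<integral>\<^sup>+\<nu>. g \<nu> \<partial>lborel))"

lemma mp_mat_id: "mp_mat (mat 1)"
  by (simp add: mp_mat_def)

lemma mp_mat_mult: assumes "mp_mat M1" "mp_mat M2" shows "mp_mat (M1 ** M2)"
  unfolding mp_mat_def
proof (intro allI impI)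
  fix g :: "real^'a \<Rightarrow> ennreal" assume [measurable]: "g \<in> borel_measurable borel"
  have "(\<integral>\<^sup>+\<nu>. g ((M1 ** M2) *v \<nu>) \<partial>lborel) = (\<integral>\<^sup>+\<nu>. (\<lambda>\<mu>. g (M1 *v \<mu>)) (M2 *v \<nu>) \<partial>lborel)"
    by (simp add: matrix_vector_mul_assoc)
  also have "\<dots> = (\<integral>\<^sup>+\<mu>. g (M1 *v \<mu>) \<partial>lborel)"
  proof -
    have m: "(\<lambda>\<mu>. g (M1 *v \<mu>)) \<in> borel_measurable borel" by measurable
    show ?thesis using assms(2) m unfolding mp_mat_def by blast
  qed
  also have "\<dots> = (\<integral>\<^sup>+\<mu>. g \<mu> \<partial>lborel)"
    using assms(1) unfolding mp_mat_def by simp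
  finally show "(\<integral>\<^sup>+\<nu>. g ((M1 ** M2) *v \<nu>) \<partial>lborel) = (\<integral>\<^sup>+\<mu>. g \<mu> \<partial>lborel)" .
qed


lemma shear_comp: "(\<Sum>k\<in>UNIV. ((if r = k then 1 else 0) + (if r = j then c$k else 0)) * (v::real^'n::finite)$k) = v$r + (if r = j then c \<bullet> v else 0)"
proof -
  have "(\<Sum>k\<in>UNIV. ((if r = k then 1 else 0) + (if r = j then c$k else 0)) * v$k) = (\<Sum>k\<in>UNIV. (if r = k then v$k else 0)) + (\<Sum>k\<in>UNIV. (if r = j then c$k * v$k else 0))"
    by (subst sum.distrib[symmetric]) (rule sum.cong, auto simp: distrib_right)
  also have "\<dots> = v$r + (if r = j then c \<bullet> v else 0)"
    by (auto simp: inner_vec_def)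
  finally show ?thesis .
qed

lemma shear_mat_mult: "shear_mat j c *v v = v + (c \<bullet> v) *\<^sub>R axis j 1"
  unfolding shear_mat_def matrix_vector_mult_def vec_eq_iff
  by (simp add: shear_comp axis_def)


lemma mp_mat_shear: assumes "c$j = 0" shows "mp_mat (shear_mat j c)"
  unfolding mp_mat_def shear_mat_mult using shear_preserves[OF assms] by blast

lemma ldl:
  fixes A :: "real^'n::finite^'n"
  assumes pd: "pd_mat A"
  shows "\<exists>M. det M = 1 \<and> mp_mat M \<and> (\<forall>i k. i \<noteq> k \<longrightarrow> (M *v axis i 1) \<bullet> (A *v (M *v axis k 1)) = 0)"
proof -
  have symA: "transpose A = A" and pos: "\<And>x. x \<noteq> 0 \<Longrightarrow> 0 < x \<bullet> (A *v x)"
    using pd unfolding pd_mat_def by auto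
  have gen: "\<exists>M. det M = 1 \<and> mp_mat M \<and> (\<forall>i\<in>S. \<forall>k. i \<noteq> k \<longrightarrow> (M *v axis i 1) \<bullet> (A *v (M *v axis k 1)) = 0)"
    if "finite S" for S
    using that
  proof (induction S rule: finite_induct)
    case empty show ?case by (intro exI[of _ "mat 1"]) (simp add: mp_mat_id)
  next
    case (insert j S)
    then obtain M where M: "det M = 1" "mp_mat M" "\<forall>i\<in>S. \<forall>k. i \<noteq> k \<longrightarrow> (M *v axis i 1) \<bullet> (A *v (M *v axis k 1)) = 0"
      by blast
    define a where "a i k = (M *v axis i 1) \<bullet> (A *v (M *v axis k 1))" for i k
    have asym: "a i k = a k i" for i k
      unfolding a_def by (rule sym_form[OF symA])
    have aS: "a i k = 0" if "i \<in> S" "i \<noteq> k" for i k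
      using M(3) that unfolding a_def by blast
    have Minj: "x = 0" if "M *v x = 0" for x
    proof -
      have "invertible M" using M(1) by (simp add: invertible_det_nz)
      then have "inj ((*v) M)" by (rule inj_matrix_vector_mult)
      then show ?thesis using that by (metis injD matrix_vector_mult_0_right)
    qed
    have ajj: "a j j > 0"
    proof -
      have "M *v axis j 1 \<noteq> 0" using Minj[of "axis j 1"] by auto
      then show ?thesis unfolding a_def by (rule pos)
    qed
    define c :: "real^'n" where "c = (\<chi> k. if k = j \<or> k \<in> S then 0 else - a j k / a j j)"
    have cj: "c$j = 0" by (simp add: c_def)
    define M' where "M' = M ** shear_mat j c"
    have M'e: "M' *v axis i 1 = M *v axis i 1 + (c$i) *\<^sub>R (M *v axis j 1)" for i
      by (simp add: M'_def matrix_vector_mul_assoc[symmetric] shear_mat_mult inner_axis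
          matrix_vector_right_distrib matrix_vector_mult_scaleR)
    have a': "(M' *v axis i 1) \<bullet> (A *v (M' *v axis k 1)) = a i k + c$k * a i j + c$i * a j k + c$i * c$k * a j j" for i k
      by (simp add: M'e a_def matrix_vector_right_distrib matrix_vector_mult_scaleR inner_add_left inner_add_right algebra_simps)
    show ?case
    proof (intro exI[of _ M'] conjI ballI allI impI)
      show "det M' = 1" by (simp add: M'_def det_mul M(1) det_shear[OF cj])
      show "mp_mat M'" unfolding M'_def by (intro mp_mat_mult M(2) mp_mat_shear cj)
      fix i k assume i: "i \<in> insert j S" and ik: "i \<noteq> k"
      show "(M' *v axis i 1) \<bullet> (A *v (M' *v axis k 1)) = 0"
      proof (cases "i = j")
        case True
        show ?thesis
        proof (cases "k \<in> S")
          case True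
          then have "a j k = 0" using aS[of k j] asym[of j k] ik \<open>i = j\<close> by auto
          then show ?thesis using \<open>i = j\<close> cj True by (simp add: a' c_def)
        next
          case False
          then show ?thesis using \<open>i = j\<close> cj ik ajj by (simp add: a' c_def field_simps)
        qed
      next
        case False
        then have iS: "i \<in> S" using i by auto
        have ci: "c$i = 0" using iS by (simp add: c_def)
        show ?thesis using aS[OF iS ik] aS[of i j] iS False ci by (simp add: a')
      qed
    qed
  qed
  show ?thesis using gen[of UNIV] by simp
qed



lemma gauss1d:
  assumes d: "d > 0"
  shows "(\<integral>\<^sup>+t. ennreal (exp (- (d * t\<^sup>2) / 2)) \<partial>lborel) = ennreal (sqrt (2 * pi / d))"
proof -
  define \<sigma> where "\<sigma> = 1 / sqrt d"
  have s2: "\<sigma>\<^sup>2 = 1 / d" using d by (simp add: \<sigma>_def power_divide)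
  have nd: "normal_density 0 \<sigma> t = sqrt (d / (2 * pi)) * exp (- (d * t\<^sup>2) / 2)" for t
    using d by (simp add: normal_density_def s2 real_sqrt_divide field_simps)
  have eq: "ennreal (exp (- (d * t\<^sup>2) / 2)) = ennreal (sqrt (2 * pi / d)) * ennreal (normal_density 0 \<sigma> t)" for t
  proof -
    have "sqrt (2 * pi / d) * sqrt (d / (2 * pi)) = 1"
      using d by (simp add: real_sqrt_mult[symmetric])
    then have "exp (- (d * t\<^sup>2) / 2) = sqrt (2 * pi / d) * normal_density 0 \<sigma> t"
      by (simp add: nd mult.assoc[symmetric])
    moreover have "ennreal (sqrt (2 * pi / d) * normal_density 0 \<sigma> t) = ennreal (sqrt (2 * pi / d)) * ennreal (normal_density 0 \<sigma> t)"
      by (rule ennreal_mult) (use d in auto)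
    ultimately show ?thesis by simp
  qed
  have one: "(\<integral>\<^sup>+t. ennreal (normal_density 0 \<sigma> t) \<partial>lborel) = 1"
  proof -
    have sp: "0 < \<sigma>" using d by (simp add: \<sigma>_def)
    show ?thesis
      by (subst nn_integral_eq_integral) (auto simp: integrable_normal_density[OF sp] integral_normal_density[OF sp])
  qed
  show ?thesis
    unfolding eq by (subst nn_integral_cmult) (simp_all add: one)
qed

lemma entry_form:
  fixes M A :: "real^'n::finite^'n"
  shows "(transpose M ** A ** M)$i$k = (M *v axis i 1) \<bullet> (A *v (M *v axis k 1))"
proof -
  have e: "D$i$k = axis i 1 \<bullet> (D *v axis k 1)" for D :: "real^'n^'n"
    by (simp add: inner_axis' matrix_vector_mult_basis column_def)
  have "(transpose M ** A ** M) *v axis k 1 = transpose M *v (A *v (M *v axis k 1))"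
    by (simp only: matrix_vector_mul_assoc matrix_mul_assoc)
  moreover have "axis i 1 \<bullet> (transpose M *v w) = (M *v axis i 1) \<bullet> w" for w
    by (metis dot_lmul_matrix vector_transpose_matrix)
  ultimately show ?thesis using e by metis
qed

lemma mv_expand:
  fixes M :: "real^'n::finite^'n"
  shows "M *v \<mu> = (\<Sum>i\<in>UNIV. \<mu>$i *\<^sub>R (M *v axis i 1))"
  by (simp add: vec_eq_iff matrix_vector_mult_def sum_component axis_def if_distrib cong: if_cong)
     (simp add: mult.commute)

lemma quad_diag:
  fixes M A :: "real^'n::finite^'n"
  assumes off: "\<And>i k. i \<noteq> k \<Longrightarrow> (M *v axis i 1) \<bullet> (A *v (M *v axis k 1)) = 0"
  shows "(M *v \<mu>) \<bullet> (A *v (M *v \<mu>)) = (\<Sum>i\<in>UNIV. (\<mu>$i)\<^sup>2 * ((M *v axis i 1) \<bullet> (A *v (M *v axis i 1))))"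
proof -
  define u where "u i = M *v axis i 1" for i
  have Asum: "A *v (\<Sum>k\<in>UNIV. \<mu>$k *\<^sub>R u k) = (\<Sum>k\<in>UNIV. \<mu>$k *\<^sub>R (A *v u k))"
    by (simp add: linear_sum[OF matrix_vector_mul_linear] matrix_vector_mult_scaleR)
  have "(M *v \<mu>) \<bullet> (A *v (M *v \<mu>)) = (\<Sum>i\<in>UNIV. \<Sum>k\<in>UNIV. \<mu>$i * (\<mu>$k * (u k \<bullet> (A *v u i))))"
    unfolding mv_expand[of M \<mu>] u_def[symmetric] Asum
    by (simp add: inner_sum_left inner_sum_right sum_distrib_left)
  also have "\<dots> = (\<Sum>i\<in>UNIV. \<mu>$i * \<mu>$i * (u i \<bullet> (A *v u i)))"
  proof (rule sum.cong[OF refl])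
    fix i
    show "(\<Sum>k\<in>UNIV. \<mu>$i * (\<mu>$k * (u k \<bullet> (A *v u i)))) = \<mu>$i * \<mu>$i * (u i \<bullet> (A *v u i))"
      by (subst sum.remove[of UNIV i]) (auto simp: off u_def intro!: sum.neutral)
  qed
  finally show ?thesis by (simp add: u_def power2_eq_square)
qed



lemma quad_meas[measurable]: "(\<lambda>\<nu>. \<nu> \<bullet> ((A::real^'n::finite^'n) *v \<nu>)) \<in> borel_measurable borel"
  by (intro borel_measurable_continuous_onI continuous_intros matrix_vector_mult_linear_continuous_on continuous_on_id)

lemma Basis_vec_range: "(Basis :: (real^'n::finite) set) = range (\<lambda>i. axis i 1)"
  by (auto simp: Basis_vec_def)

lemma inj_axis1: "inj (\<lambda>i::'n::finite. axis i (1::real))"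
  by (auto simp: inj_on_def axis_eq_axis)

lemma sqrt_prod: "sqrt (prod f A) = (\<Prod>i\<in>A. sqrt (f i))"
  by (induction A rule: infinite_finite_induct) (auto simp: real_sqrt_mult)

lemma gauss0:
  fixes A :: "real^'n::finite^'n"
  assumes pd: "pd_mat A"
  shows "det A > 0 \<and> (\<integral>\<^sup>+\<nu>. ennreal (exp (- (\<nu> \<bullet> (A *v \<nu>)) / 2)) \<partial>lborel) = ennreal (sqrt (2*pi) ^ CARD('n) / sqrt (det A))"
proof -
  have symA: "transpose A = A" and pos: "\<And>x. x \<noteq> 0 \<Longrightarrow> 0 < x \<bullet> (A *v x)"
    using pd unfolding pd_mat_def by auto
  obtain M where M: "det M = 1" "mp_mat M" and off: "\<And>i k. i \<noteq> k \<Longrightarrow> (M *v axis i 1) \<bullet> (A *v (M *v axis k 1)) = 0"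
    using ldl[OF pd] by blast
  define q where "q b = (M *v b) \<bullet> (A *v (M *v b))" for b
  have Minj: "x = 0" if "M *v x = 0" for x
  proof -
    have "invertible M" using M(1) by (simp add: invertible_det_nz)
    then have "inj ((*v) M)" by (rule inj_matrix_vector_mult)
    then show ?thesis using that by (metis injD matrix_vector_mult_0_right)
  qed
  have qpos: "q (axis i 1) > 0" for i
  proof -
    have "M *v axis i 1 \<noteq> 0" using Minj[of "axis i 1"] by auto
    then show ?thesis unfolding q_def by (rule pos)
  qed
  have qposB: "q b > 0" if "b \<in> Basis" for b using that qpos by (auto simp: Basis_vec_range)
  have detA: "det A = (\<Prod>i\<in>UNIV. q (axis i 1))"
  proof -
    have "det (transpose M ** A ** M) = det A" by (simp add: det_mul M(1))
    moreover have "det (transpose M ** A ** M) = (\<Prod>i\<in>UNIV. (transpose M ** A ** M)$i$i)"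
      by (rule det_diagonal) (simp add: entry_form off)
    ultimately show ?thesis by (simp add: entry_form q_def)
  qed
  have dpos: "det A > 0" unfolding detA using qpos by (simp add: prod_pos)
  have "(\<integral>\<^sup>+\<nu>. ennreal (exp (- (\<nu> \<bullet> (A *v \<nu>)) / 2)) \<partial>lborel)
      = (\<integral>\<^sup>+\<mu>. ennreal (exp (- ((M *v \<mu>) \<bullet> (A *v (M *v \<mu>))) / 2)) \<partial>lborel)"
    using M(2) unfolding mp_mat_def
    by (rule allE[where x="\<lambda>\<nu>. ennreal (exp (- (\<nu> \<bullet> (A *v \<nu>)) / 2))"]) (simp add: measurable_compose[OF quad_meas])
  also have "\<dots> = (\<integral>\<^sup>+\<mu>. (\<Prod>b\<in>Basis. ennreal (exp (- (q b * (\<mu> \<bullet> b)\<^sup>2) / 2))) \<partial>lborel)"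
  proof (rule nn_integral_cong)
    fix \<mu> :: "real^'n"
    have "exp (- ((M *v \<mu>) \<bullet> (A *v (M *v \<mu>))) / 2) = exp (\<Sum>i\<in>UNIV. - (q (axis i 1) * (\<mu>$i)\<^sup>2) / 2)"
      by (simp add: quad_diag[OF off] q_def sum_divide_distrib[symmetric] sum_negf mult.commute)
    also have "\<dots> = (\<Prod>i\<in>UNIV. exp (- (q (axis i 1) * (\<mu>$i)\<^sup>2) / 2))"
      by (simp add: exp_sum)
    finally have "ennreal (exp (- ((M *v \<mu>) \<bullet> (A *v (M *v \<mu>))) / 2)) = (\<Prod>i\<in>UNIV. ennreal (exp (- (q (axis i 1) * (\<mu>$i)\<^sup>2) / 2)))"
      by (simp add: prod_ennreal)
    also have "\<dots> = (\<Prod>b\<in>Basis. ennreal (exp (- (q b * (\<mu> \<bullet> b)\<^sup>2) / 2)))"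
      unfolding Basis_vec_range by (simp add: prod.reindex[OF inj_axis1] inner_axis)
    finally show "ennreal (exp (- ((M *v \<mu>) \<bullet> (A *v (M *v \<mu>))) / 2)) = (\<Prod>b\<in>Basis. ennreal (exp (- (q b * (\<mu> \<bullet> b)\<^sup>2) / 2)))" .
  qed
  also have "\<dots> = (\<Prod>b\<in>Basis. (\<integral>\<^sup>+t. ennreal (exp (- (q b * t\<^sup>2) / 2)) \<partial>lborel))"
    by (rule nn_integral_lborel_prod) auto
  also have "\<dots> = (\<Prod>b\<in>Basis. ennreal (sqrt (2 * pi / q b)))"
    by (rule prod.cong[OF refl]) (rule gauss1d[OF qposB])
  also have "\<dots> = (\<Prod>i\<in>UNIV. ennreal (sqrt (2 * pi / q (axis i 1))))"
    unfolding Basis_vec_range by (simp add: prod.reindex[OF inj_axis1])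
  also have "\<dots> = ennreal (\<Prod>i\<in>UNIV. sqrt (2 * pi / q (axis i 1)))"
    by (rule prod_ennreal) (simp add: less_imp_le qpos)
  also have "(\<Prod>i\<in>UNIV. sqrt (2 * pi / q (axis i 1))) = sqrt (2*pi) ^ CARD('n) / sqrt (det A)"
    by (simp add: detA real_sqrt_divide prod_dividef sqrt_prod)
  finally show ?thesis using dpos by simp
qed



lemma pd_invertible:
  fixes A :: "real^'n::finite^'n"
  assumes "pd_mat A"
  shows "A ** matrix_inv A = mat 1"
proof -
  have "det A > 0" using gauss0[OF assms] by blast
  then have "invertible A" by (simp add: invertible_det_nz)
  then show ?thesis unfolding invertible_def matrix_inv_def by (rule someI2_ex) blast
qed

lemma gauss_shift:
  fixes A :: "real^'n::finite^'n"
  assumes pd: "pd_mat A"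
  shows "(\<integral>\<^sup>+\<nu>. ennreal (exp (\<nu> \<bullet> y - \<nu> \<bullet> (A *v \<nu>) / 2)) \<partial>lborel)
       = ennreal (sqrt (2*pi) ^ CARD('n) / sqrt (det A)) * ennreal (exp (1/2 * (y \<bullet> (matrix_inv A *v y))))"
proof -
  have symA: "transpose A = A" using pd unfolding pd_mat_def by auto
  define m where "m = matrix_inv A *v y"
  have Am: "A *v m = y" unfolding m_def
    by (simp add: matrix_vector_mul_assoc pd_invertible[OF pd])
  have pt: "exp (\<nu> \<bullet> y - \<nu> \<bullet> (A *v \<nu>) / 2) = exp (1/2 * (y \<bullet> m)) * exp (- ((-m + \<nu>) \<bullet> (A *v (-m + \<nu>))) / 2)" for \<nu>
  proof -
    have s: "m \<bullet> (A *v \<nu>) = \<nu> \<bullet> (A *v m)" by (rule sym_form[OF symA])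
    have "(-m + \<nu>) \<bullet> (A *v (-m + \<nu>)) = \<nu> \<bullet> (A *v \<nu>) - 2 * (\<nu> \<bullet> y) + y \<bullet> m"
      using s by (simp add: matrix_vector_right_distrib matrix_vector_mult_scaleR inner_add_left inner_add_right
            Am inner_commute[of m y] algebra_simps)
    then show ?thesis by (simp add: exp_add[symmetric] field_simps)
  qed
  have "(\<integral>\<^sup>+\<nu>. ennreal (exp (\<nu> \<bullet> y - \<nu> \<bullet> (A *v \<nu>) / 2)) \<partial>lborel)
      = (\<integral>\<^sup>+\<nu>. ennreal (exp (1/2 * (y \<bullet> m))) * ennreal (exp (- ((-m + \<nu>) \<bullet> (A *v (-m + \<nu>))) / 2)) \<partial>lborel)"
    by (simp only: pt ennreal_mult exp_ge_zero)
  also have "\<dots> = ennreal (exp (1/2 * (y \<bullet> m))) * (\<integral>\<^sup>+\<nu>. ennreal (exp (- ((-m + \<nu>) \<bullet> (A *v (-m + \<nu>))) / 2)) \<partial>lborel)"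
    by (rule nn_integral_cmult) measurable
  also have "(\<integral>\<^sup>+\<nu>. ennreal (exp (- ((-m + \<nu>) \<bullet> (A *v (-m + \<nu>))) / 2)) \<partial>lborel)
      = (\<integral>\<^sup>+\<nu>. ennreal (exp (- (\<nu> \<bullet> (A *v \<nu>)) / 2)) \<partial>distr lborel borel ((+) (-m)))"
    by (subst nn_integral_distr) auto
  also have "\<dots> = ennreal (sqrt (2*pi) ^ CARD('n) / sqrt (det A))"
    using gauss0[OF pd] by (simp add: lborel_distr_plus)
  finally show ?thesis by (simp add: m_def mult.commute)
qed



theorem lemma1:
  fixes M :: "'a measure" and v :: "'a \<Rightarrow> real^'n"
    and R H :: "real^'n^'n" and x :: "real^'n"
  assumes "subgaussian M v R"
    and "pd_mat H"
  shows "ennreal (1 / sqrt (det (H + R))) *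
           (\<integral>\<^sup>+\<omega>. ennreal (exp (1/2 * ((x + v \<omega>) \<bullet> (matrix_inv (H + R) *v (x + v \<omega>))))) \<partial>M)
         \<le> ennreal (1 / sqrt (det H) * exp (1/2 * (x \<bullet> (matrix_inv H *v x))))"
proof -
  have ps: "prob_space M" and psdR: "psd_mat R" and vm[measurable]: "v \<in> borel_measurable M"
    and mgf: "\<And>\<nu>. integrable M (\<lambda>\<omega>. exp (\<nu> \<bullet> v \<omega>)) \<and> (\<integral>\<omega>. exp (\<nu> \<bullet> v \<omega>) \<partial>M) \<le> exp (1/2 * (\<nu> \<bullet> (R *v \<nu>)))"
    using assms(1) unfolding subgaussian_def by auto
  interpret MS: prob_space M by (rule ps)
  interpret P: pair_sigma_finite M lborel
    by (simp add: pair_sigma_finite_def MS.sigma_finite_measure_axioms lborel.sigma_finite_measure_axioms)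
  define A where "A = H + R"
  have quadA: "\<nu> \<bullet> (A *v \<nu>) = \<nu> \<bullet> (H *v \<nu>) + \<nu> \<bullet> (R *v \<nu>)" for \<nu>
    by (simp add: A_def matrix_vector_mult_add_rdistrib inner_add_right)
  have pdA: "pd_mat A"
  proof -
    have "transpose A = A"
      using assms(2) psdR unfolding pd_mat_def psd_mat_def A_def
      by (simp add: vec_eq_iff transpose_def)
    moreover have "0 < \<nu> \<bullet> (A *v \<nu>)" if "\<nu> \<noteq> 0" for \<nu>
      using assms(2) psdR that unfolding pd_mat_def psd_mat_def quadA
      by (metis add_pos_nonneg)
    ultimately show ?thesis unfolding pd_mat_def by blast
  qed
  define K where "K = sqrt (2*pi) ^ CARD('n)"
  have Kpos: "K > 0" by (simp add: K_def)
  have dA: "det A > 0" and dH: "det H > 0" using gauss0[OF pdA] gauss0[OF assms(2)] by auto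
  define f where "f \<omega> \<nu> = ennreal (exp (\<nu> \<bullet> (x + v \<omega>) - \<nu> \<bullet> (A *v \<nu>) / 2))" for \<omega> \<nu>
  have fm: "case_prod f \<in> borel_measurable (M \<Otimes>\<^sub>M lborel)"
    unfolding f_def by measurable
  have "ennreal K * (ennreal (1 / sqrt (det A)) *
           (\<integral>\<^sup>+\<omega>. ennreal (exp (1/2 * ((x + v \<omega>) \<bullet> (matrix_inv A *v (x + v \<omega>))))) \<partial>M))
      = (\<integral>\<^sup>+\<omega>. ennreal (K / sqrt (det A)) * ennreal (exp (1/2 * ((x + v \<omega>) \<bullet> (matrix_inv A *v (x + v \<omega>))))) \<partial>M)"
  proof -
    have kk: "ennreal (K / sqrt (det A)) = ennreal K * ennreal (1 / sqrt (det A))"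
      by (subst ennreal_mult[symmetric]) (auto simp: Kpos less_imp_le dA)
    show ?thesis by (subst nn_integral_cmult) (measurable, simp only: kk mult.assoc)
  qed
  also have "\<dots> = (\<integral>\<^sup>+\<omega>. (\<integral>\<^sup>+\<nu>. f \<omega> \<nu> \<partial>lborel) \<partial>M)"
    unfolding f_def by (simp add: gauss_shift[OF pdA] K_def)
  also have "\<dots> = (\<integral>\<^sup>+\<nu>. (\<integral>\<^sup>+\<omega>. f \<omega> \<nu> \<partial>M) \<partial>lborel)"
    by (rule P.Fubini'[OF fm, symmetric])
  also have "\<dots> \<le> (\<integral>\<^sup>+\<nu>. ennreal (exp (\<nu> \<bullet> x - \<nu> \<bullet> (H *v \<nu>) / 2)) \<partial>lborel)"
  proof (rule nn_integral_mono)
    fix \<nu> :: "real^'n"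
    have "(\<integral>\<^sup>+\<omega>. f \<omega> \<nu> \<partial>M) = (\<integral>\<^sup>+\<omega>. ennreal (exp (\<nu> \<bullet> x - \<nu> \<bullet> (A *v \<nu>) / 2)) * ennreal (exp (\<nu> \<bullet> v \<omega>)) \<partial>M)"
      unfolding f_def
      by (intro nn_integral_cong) (simp add: ennreal_mult[symmetric] exp_add[symmetric] inner_add_right algebra_simps)
    also have "\<dots> = ennreal (exp (\<nu> \<bullet> x - \<nu> \<bullet> (A *v \<nu>) / 2)) * (\<integral>\<^sup>+\<omega>. ennreal (exp (\<nu> \<bullet> v \<omega>)) \<partial>M)"
      by (rule nn_integral_cmult) measurable
    also have "(\<integral>\<^sup>+\<omega>. ennreal (exp (\<nu> \<bullet> v \<omega>)) \<partial>M) = ennreal (\<integral>\<omega>. exp (\<nu> \<bullet> v \<omega>) \<partial>M)"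
      using mgf[of \<nu>] by (intro nn_integral_eq_integral) auto
    also have "ennreal (exp (\<nu> \<bullet> x - \<nu> \<bullet> (A *v \<nu>) / 2)) * ennreal (\<integral>\<omega>. exp (\<nu> \<bullet> v \<omega>) \<partial>M)
        \<le> ennreal (exp (\<nu> \<bullet> x - \<nu> \<bullet> (A *v \<nu>) / 2)) * ennreal (exp (1/2 * (\<nu> \<bullet> (R *v \<nu>))))"
      using mgf[of \<nu>] by (intro mult_left_mono ennreal_leI) auto
    also have "\<dots> = ennreal (exp (\<nu> \<bullet> x - \<nu> \<bullet> (H *v \<nu>) / 2))"
      by (simp add: ennreal_mult[symmetric] exp_add[symmetric] quadA field_simps)
    finally show "(\<integral>\<^sup>+\<omega>. f \<omega> \<nu> \<partial>M) \<le> ennreal (exp (\<nu> \<bullet> x - \<nu> \<bullet> (H *v \<nu>) / 2))" .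
  qed
  also have "\<dots> = ennreal (K / sqrt (det H)) * ennreal (exp (1/2 * (x \<bullet> (matrix_inv H *v x))))"
    by (simp add: gauss_shift[OF assms(2)] K_def)
  also have "\<dots> = ennreal K * ennreal (1 / sqrt (det H) * exp (1/2 * (x \<bullet> (matrix_inv H *v x))))"
    by (simp add: ennreal_mult[symmetric] Kpos less_imp_le dH)
  finally have "ennreal K * (ennreal (1 / sqrt (det A)) *
           (\<integral>\<^sup>+\<omega>. ennreal (exp (1/2 * ((x + v \<omega>) \<bullet> (matrix_inv A *v (x + v \<omega>))))) \<partial>M))
      \<le> ennreal K * ennreal (1 / sqrt (det H) * exp (1/2 * (x \<bullet> (matrix_inv H *v x))))" .
  then show ?thesis
    unfolding A_def using Kpos by (subst (asm) ennreal_mult_le_mult_iff) auto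
qed

end
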